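(* For any connected graph $G$ with vertex set $\{u_1,\dots,u_n\}$, $n\ge2$, and any family $\mathcal{H}=\{H_1,\dots,H_n\}$ of graphs, $\dim_l(G\circ\mathcal{H})\ge\dim_l(G)$. Moreover, if every $H_i$ is an edgeless graph, then $\dim_l(G\circ\mathcal{H})=\dim_l(G)$.
   Context: All graphs are finite and simple with at least one vertex. For a connected graph $G$, $\dim_l(G)$ is the minimum size of $S\subseteq V(G)$ such that for every two adjacent vertices $x,y$ there is $s\in S$ with $d_G(s,x)\ne d_G(s,y)$ ($d_G$ the shortest-path distance). Lexicographic product $G\circ\mathcal{H}$: vertex set $\bigcup_i\{u_i\}\times V(H_i)$, $(u_i,v)\sim(u_j,w)$ iff $u_iu_j\in E(G)$, or $i=j$ and $vw\in E(H_i)$. *)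

theory Defs
  imports Main
begin

type_synonym 'a graph = "'a set \<times> ('a \<times> 'a) set"

definition verts :: "'a graph \<Rightarrow> 'a set" where "verts G = fst G"
definition edges :: "'a graph \<Rightarrow> ('a \<times> 'a) set" where "edges G = snd G"

definition simple_graph :: "'a graph \<Rightarrow> bool" where
  "simple_graph G \<longleftrightarrow> finite (verts G) \<and> verts G \<noteq> {} \<and>
     edges G \<subseteq> verts G \<times> verts G \<and> sym (edges G) \<and> irrefl (edges G)"

definition gdist :: "'a graph \<Rightarrow> 'a \<Rightarrow> 'a \<Rightarrow> nat" where
  "gdist G x y = (LEAST k. (x, y) \<in> edges G ^^ k)"

definition connected_graph :: "'a graph \<Rightarrow> bool" where
  "connected_graph G \<longleftrightarrow> simple_graph G \<and>
     (\<forall>x\<in>verts G. \<forall>y\<in>verts G. \<exists>k. (x, y) \<in> edges G ^^ k)"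

definition local_resolving :: "'a graph \<Rightarrow> 'a set \<Rightarrow> bool" where
  "local_resolving G S \<longleftrightarrow> S \<subseteq> verts G \<and>
     (\<forall>x y. (x, y) \<in> edges G \<longrightarrow> (\<exists>s\<in>S. gdist G s x \<noteq> gdist G s y))"

definition local_metric_dim :: "'a graph \<Rightarrow> nat" where
  "local_metric_dim G = (LEAST k. \<exists>S. local_resolving G S \<and> card S = k)"

definition lex_product :: "'a graph \<Rightarrow> ('a \<Rightarrow> 'b graph) \<Rightarrow> ('a \<times> 'b) graph" where
  "lex_product G H =
    (let V = Sigma (verts G) (\<lambda>u. verts (H u)) in
     (V, {((u, v), (u', w)). (u, v) \<in> V \<and> (u', w) \<in> V \<and>
            ((u, u') \<in> edges G \<or> (u = u' \<and> (v, w) \<in> edges (H u)))}))"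

end

theory Submission
  imports Defs
begin

lemma gdist_refl: "gdist G x x = 0"
  unfolding gdist_def by (rule Least_eq_0) simp

lemma gdist_edge: "gdist G x y = 1" if "(x,y) \<in> edges G" "x \<noteq> y"
  unfolding gdist_def
proof (rule Least_equality)
  show "(x, y) \<in> edges G ^^ 1" using that by simp
next
  fix k assume "(x, y) \<in> edges G ^^ k"
  then show "1 \<le> k" using that by (cases k) auto
qed

lemma gdist_not1: "(x,y) \<in> edges G ^^ k \<Longrightarrow> (x,y) \<notin> edges G \<Longrightarrow> gdist G x y \<noteq> 1"
proof
  assume p: "(x,y) \<in> edges G ^^ k" and n: "(x,y) \<notin> edges G" and e: "gdist G x y = 1"
  have "(x,y) \<in> edges G ^^ gdist G x y" unfolding gdist_def by (rule LeastI[of _ k]) (rule p)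
  with e n show False by simp
qed

lemma verts_lex: "verts (lex_product G H) = Sigma (verts G) (\<lambda>u. verts (H u))"
  by (simp add: lex_product_def verts_def Let_def)

lemma lex_edge_iff: "((u,v),(u',w)) \<in> edges (lex_product G H) \<longleftrightarrow>
   u \<in> verts G \<and> v \<in> verts (H u) \<and> u' \<in> verts G \<and> w \<in> verts (H u') \<and>
   ((u,u') \<in> edges G \<or> (u = u' \<and> (v,w) \<in> edges (H u)))"
  by (simp add: lex_product_def edges_def verts_def Let_def)

lemma relpow_proj:
  "((a,b),(u,v)) \<in> edges (lex_product G H) ^^ k \<Longrightarrow> \<exists>j\<le>k. (a,u) \<in> edges G ^^ j"
proof (induction k arbitrary: u v)
  case 0
  then show ?case by auto
next
  case (Suc k)
  then obtain z where z1: "((a,b),z) \<in> edges (lex_product G H) ^^ k"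
    and z2: "(z,(u,v)) \<in> edges (lex_product G H)" by auto
  obtain c c' where zc: "z = (c,c')" by (cases z)
  from Suc.IH[of c c'] z1 zc obtain j where j: "j \<le> k" "(a,c) \<in> edges G ^^ j" by auto
  from z2 zc have "(c,u) \<in> edges G \<or> c = u" by (auto simp: lex_edge_iff)
  then show ?case
  proof
    assume "(c,u) \<in> edges G"
    then have "(a,u) \<in> edges G ^^ Suc j" using j(2) by auto
    then show ?case using j(1) by (intro exI[of _ "Suc j"]) auto
  next
    assume "c = u" then show ?case using j by (intro exI[of _ j]) auto
  qed
qed

lemma relpow_lift:
  assumes EV: "edges G \<subseteq> verts G \<times> verts G"
    and ne: "\<forall>c\<in>verts G. verts (H c) \<noteq> {}"
  shows "0 < k \<Longrightarrow> (a,u) \<in> edges G ^^ k \<Longrightarrow> b \<in> verts (H a) \<Longrightarrow> v \<in> verts (H u)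
     \<Longrightarrow> ((a,b),(u,v)) \<in> edges (lex_product G H) ^^ k"
proof (induction k arbitrary: u v)
  case 0
  then show ?case by simp
next
  case (Suc k)
  then obtain c where c1: "(a,c) \<in> edges G ^^ k" and c2: "(c,u) \<in> edges G" by auto
  show ?case
  proof (cases "k = 0")
    case True
    with c1 have "a = c" by simp
    with c2 EV Suc.prems True show ?thesis by (auto simp: lex_edge_iff)
  next
    case False
    from c2 EV have cV: "c \<in> verts G" by auto
    with ne obtain c' where c': "c' \<in> verts (H c)" by auto
    from Suc.IH[of c c'] False c1 Suc.prems c' have
      "((a,b),(c,c')) \<in> edges (lex_product G H) ^^ k" by auto
    moreover have "((c,c'),(u,v)) \<in> edges (lex_product G H)"
      using c2 EV c' Suc.prems by (auto simp: lex_edge_iff)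
    ultimately show ?thesis by auto
  qed
qed

lemma gdist_lex:
  assumes cg: "connected_graph G"
    and ne: "\<forall>c\<in>verts G. verts (H c) \<noteq> {}"
    and aV: "a \<in> verts G" and uV: "u \<in> verts G" and au: "a \<noteq> u"
    and b: "b \<in> verts (H a)" and v: "v \<in> verts (H u)"
  shows "gdist (lex_product G H) (a,b) (u,v) = gdist G a u"
proof -
  from cg aV uV obtain k where k: "(a,u) \<in> edges G ^^ k" by (auto simp: connected_graph_def)
  have EV: "edges G \<subseteq> verts G \<times> verts G" using cg by (auto simp: connected_graph_def simple_graph_def)
  define d where "d = gdist G a u"
  have dE: "(a,u) \<in> edges G ^^ d" unfolding d_def gdist_def by (rule LeastI[of _ k]) (rule k)
  have "d \<noteq> 0" using dE au by (cases d) auto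
  then have L: "((a,b),(u,v)) \<in> edges (lex_product G H) ^^ d"
    using relpow_lift[OF EV ne] dE b v by auto
  show ?thesis
    unfolding d_def[symmetric] gdist_def[of "lex_product G H"]
  proof (rule Least_equality)
    show "((a,b),(u,v)) \<in> edges (lex_product G H) ^^ d" by (rule L)
  next
    fix y assume "((a,b),(u,v)) \<in> edges (lex_product G H) ^^ y"
    then obtain j where j: "j \<le> y" "(a,u) \<in> edges G ^^ j" using relpow_proj[where G=G and H=H and k=y] by blast
    have "d \<le> j" unfolding d_def gdist_def by (rule Least_le) (rule j(2))
    with j show "d \<le> y" by simp
  qed
qed

theorem mainTheorem7:
  fixes G :: "'a graph" and H :: "'a \<Rightarrow> 'b graph"
  assumes "connected_graph G"
    and "card (verts G) \<ge> 2"
    and "\<forall>u\<in>verts G. simple_graph (H u)"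
  shows "local_metric_dim (lex_product G H) \<ge> local_metric_dim G
     \<and> ((\<forall>u\<in>verts G. edges (H u) = {}) \<longrightarrow>
          local_metric_dim (lex_product G H) = local_metric_dim G)"
proof -
  note cg = assms(1)
  have sg: "simple_graph G" using cg by (simp add: connected_graph_def)
  have EV: "edges G \<subseteq> verts G \<times> verts G" and fin: "finite (verts G)"
    and sy: "sym (edges G)" and ir: "irrefl (edges G)" using sg by (auto simp: simple_graph_def)
  have ne: "\<forall>c\<in>verts G. verts (H c) \<noteq> {}" using assms(3) by (auto simp: simple_graph_def)
  have finH: "\<forall>c\<in>verts G. finite (verts (H c))" using assms(3) by (auto simp: simple_graph_def)
  have irH: "\<forall>c\<in>verts G. irrefl (edges (H c))" using assms(3) by (auto simp: simple_graph_def)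
  define L where "L = lex_product G H"
  have VL: "verts L = Sigma (verts G) (\<lambda>u. verts (H u))" unfolding L_def by (rule verts_lex)
  have finL: "finite (verts L)" unfolding VL using fin finH by auto
  have resG: "local_resolving G (verts G)"
    unfolding local_resolving_def
  proof (intro conjI allI impI)
    fix x y assume e: "(x,y) \<in> edges G"
    then have "x \<noteq> y" "x \<in> verts G" using ir EV by (auto simp: irrefl_def)
    then show "\<exists>s\<in>verts G. gdist G s x \<noteq> gdist G s y"
      using e by (intro bexI[of _ x]) (auto simp: gdist_refl gdist_edge)
  qed simp
  have resL: "local_resolving L (verts L)"
    unfolding local_resolving_def
  proof (intro conjI allI impI)
    fix x y assume e: "(x,y) \<in> edges L"
    obtain u v u' w where xy: "x = (u,v)" "y = (u',w)" by (cases x, cases y) auto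
    have "x \<noteq> y" "x \<in> verts L" using e irH unfolding xy L_def
      using ir by (auto simp: lex_edge_iff verts_lex irrefl_def)
    then show "\<exists>s\<in>verts L. gdist L s x \<noteq> gdist L s y"
      using e by (intro bexI[of _ x]) (auto simp: gdist_refl gdist_edge)
  qed simp
  obtain SL where rSL: "local_resolving L SL" and cSL: "card SL = local_metric_dim L"
    using LeastI_ex[of "\<lambda>k. \<exists>S. local_resolving L S \<and> card S = k"] resL
    unfolding local_metric_dim_def by blast
  have part1: "local_metric_dim G \<le> local_metric_dim L"
  proof -
    have SLV: "SL \<subseteq> verts L" using rSL by (simp add: local_resolving_def)
    have "local_resolving G (fst ` SL)"
      unfolding local_resolving_def
    proof (intro conjI allI impI)
      show "fst ` SL \<subseteq> verts G" using SLV VL by auto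
    next
      fix u u' assume e: "(u,u') \<in> edges G"
      then have uu: "u \<noteq> u'" "u \<in> verts G" "u' \<in> verts G" using ir EV by (auto simp: irrefl_def)
      obtain v w where v: "v \<in> verts (H u)" and w: "w \<in> verts (H u')" using ne uu by blast
      have "((u,v),(u',w)) \<in> edges L" using e uu v w unfolding L_def by (simp add: lex_edge_iff)
      then obtain s where s: "s \<in> SL" and sd: "gdist L s (u,v) \<noteq> gdist L s (u',w)"
        using rSL unfolding local_resolving_def by blast
      obtain a b where ab: "s = (a,b)" by (cases s)
      have aV: "a \<in> verts G" and bV: "b \<in> verts (H a)" using s SLV VL ab by auto
      have aS: "a \<in> fst ` SL" using s ab by force
      show "\<exists>t\<in>fst ` SL. gdist G t u \<noteq> gdist G t u'"
      proof (cases "a = u \<or> a = u'")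
        case True
        have e': "(u',u) \<in> edges G" using e sy by (auto dest: symD)
        from True show ?thesis
        proof
          assume "a = u" then show ?thesis using aS e uu
            by (intro bexI[of _ a]) (auto simp: gdist_refl gdist_edge)
        next
          assume "a = u'" then show ?thesis using aS e' uu
            by (intro bexI[of _ a]) (auto simp: gdist_refl gdist_edge)
        qed
      next
        case False
        then show ?thesis using sd aS ab gdist_lex[OF cg ne aV _ _ bV] uu v w unfolding L_def
          by (intro bexI[of _ a]) auto
      qed
    qed
    then have "local_metric_dim G \<le> card (fst ` SL)"
      unfolding local_metric_dim_def by (intro Least_le) blast
    also have "\<dots> \<le> card SL" using finL SLV by (intro card_image_le) (rule finite_subset)
    finally show ?thesis using cSL by simp
  qed
  have part2: "local_metric_dim L \<le> local_metric_dim G" if eH: "\<forall>u\<in>verts G. edges (H u) = {}"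
  proof -
    obtain S where rS: "local_resolving G S" and cS: "card S = local_metric_dim G"
      using LeastI_ex[of "\<lambda>k. \<exists>S. local_resolving G S \<and> card S = k"] resG
      unfolding local_metric_dim_def by blast
    have SV: "S \<subseteq> verts G" using rS by (simp add: local_resolving_def)
    define pick where "pick a = (SOME b. b \<in> verts (H a))" for a
    have pk: "pick a \<in> verts (H a)" if aV0: "a \<in> verts G" for a
    proof -
      have "verts (H a) \<noteq> {}" using ne aV0 by simp
      then obtain b where "b \<in> verts (H a)" by blast
      then show ?thesis unfolding pick_def by (rule someI)
    qed
    define T where "T = (\<lambda>a. (a, pick a)) ` S"
    have key: "gdist L (a, b) (a, v) \<noteq> 1"
      if aV: "a \<in> verts G" and b: "b \<in> verts (H a)" and v: "v \<in> verts (H a)"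
        and ea: "(a,u') \<in> edges G" and w: "w \<in> verts (H u')" for a b v u' w
    proof (cases "b = v")
      case True then show ?thesis by (simp add: gdist_refl)
    next
      case False
      have u'V: "u' \<in> verts G" using ea EV by auto
      have e1: "((a,b),(u',w)) \<in> edges L" using aV b ea w u'V unfolding L_def by (simp add: lex_edge_iff)
      have e2: "((u',w),(a,v)) \<in> edges L" using aV v ea w u'V sy unfolding L_def
        by (auto simp: lex_edge_iff dest: symD)
      have "((a,b),(a,v)) \<in> edges L ^^ 2" using e1 e2 by (auto simp: numeral_2_eq_2)
      moreover have "((a,b),(a,v)) \<notin> edges L" using eH aV ir unfolding L_def
        by (auto simp: lex_edge_iff irrefl_def)
      ultimately show ?thesis by (rule gdist_not1)
    qed
    have "local_resolving L T"
      unfolding local_resolving_def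
    proof (intro conjI allI impI)
      show "T \<subseteq> verts L" unfolding T_def VL using SV pk by auto
    next
      fix x y assume e: "(x,y) \<in> edges L"
      obtain u v u' w where xy: "x = (u,v)" "y = (u',w)" by (cases x, cases y) auto
      have eu: "(u,u') \<in> edges G" and uV: "u \<in> verts G" "u' \<in> verts G"
        and v: "v \<in> verts (H u)" and w: "w \<in> verts (H u')"
        using e eH unfolding xy L_def by (auto simp: lex_edge_iff)
      have eu': "(u',u) \<in> edges G" using eu sy by (auto dest: symD)
      have uu: "u \<noteq> u'" using eu ir by (auto simp: irrefl_def)
      obtain a where aS: "a \<in> S" and ad: "gdist G a u \<noteq> gdist G a u'"
        using rS eu unfolding local_resolving_def by blast
      have aV: "a \<in> verts G" using aS SV by auto
      have aT: "(a, pick a) \<in> T" using aS unfolding T_def by auto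
      show "\<exists>s\<in>T. gdist L s x \<noteq> gdist L s y"
      proof (rule bexI[OF _ aT])
        consider "a = u" | "a = u'" | "a \<noteq> u \<and> a \<noteq> u'" by blast
        then show "gdist L (a, pick a) x \<noteq> gdist L (a, pick a) y"
        proof cases
          case 1
          have "gdist L (a, pick a) y = 1" using gdist_lex[OF cg ne aV uV(2) _ pk[OF aV] w] 1 uu eu
            unfolding xy L_def by (simp add: gdist_edge)
          moreover have "gdist L (a, pick a) x \<noteq> 1" using key[OF aV pk[OF aV] _ _ w] 1 v eu
            unfolding xy by simp
          ultimately show ?thesis by simp
        next
          case 2
          have "gdist L (a, pick a) x = 1" using gdist_lex[OF cg ne aV uV(1) _ pk[OF aV] v] 2 uu eu'
            unfolding xy L_def by (simp add: gdist_edge)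
          moreover have "gdist L (a, pick a) y \<noteq> 1" using key[OF aV pk[OF aV] _ _ v] 2 w eu'
            unfolding xy by simp
          ultimately show ?thesis by simp
        next
          case 3
          then show ?thesis using ad gdist_lex[OF cg ne aV uV(1) _ pk[OF aV] v]
              gdist_lex[OF cg ne aV uV(2) _ pk[OF aV] w] unfolding xy L_def by simp
        qed
      qed
    qed
    then have "local_metric_dim L \<le> card T"
      unfolding local_metric_dim_def by (intro Least_le) blast
    also have "\<dots> \<le> card S" unfolding T_def by (rule card_image_le) (rule finite_subset[OF SV fin])
    finally show ?thesis using cS by simp
  qed
  show ?thesis using part1 part2 unfolding L_def by (auto intro: antisym)
qed

end
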